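(* Let $(X_B,X_C,X_R)$ be an OCC (not necessarily tight) in a graph $G$ and let $(A_B,A_C,A_R)$ be a tight OCC in $G$. Then $|A_C \cap X_B| \leq |X_C|$.
   Context: An OCT of $G$ is a set $S \subseteq V(G)$ with $G - S$ bipartite; $\mathrm{oct}(G)$ is its minimum size. An odd cycle cut (OCC) of $G$ is a partition $(X_B, X_C, X_R)$ of $V(G)$ such that $G[X_B]$ is bipartite, there is no edge between $X_B$ and $X_R$, and $X_B \cup X_C \neq \emptyset$. It is tight if $|X_C| = \mathrm{oct}(G[X_B \cup X_C])$. *)

theory Defs
  imports Main
begin

definition graph :: "'a set \<Rightarrow> ('a \<Rightarrow> 'a \<Rightarrow> bool) \<Rightarrow> bool" where
  "graph V E \<longleftrightarrow> finite V \<and> (\<forall>u v. E u v \<longrightarrow> u \<in> V \<and> v \<in> V \<and> u \<noteq> v \<and> E v u)"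

definition bipartite_on :: "('a \<Rightarrow> 'a \<Rightarrow> bool) \<Rightarrow> 'a set \<Rightarrow> bool" where
  "bipartite_on E S \<longleftrightarrow> (\<exists>f :: 'a \<Rightarrow> bool. \<forall>u\<in>S. \<forall>v\<in>S. E u v \<longrightarrow> f u \<noteq> f v)"

definition oct :: "('a \<Rightarrow> 'a \<Rightarrow> bool) \<Rightarrow> 'a set \<Rightarrow> nat" where
  "oct E S = Min {card T | T. T \<subseteq> S \<and> bipartite_on E (S - T)}"

definition is_occ :: "'a set \<Rightarrow> ('a \<Rightarrow> 'a \<Rightarrow> bool) \<Rightarrow> 'a set \<Rightarrow> 'a set \<Rightarrow> 'a set \<Rightarrow> bool" where
  "is_occ V E XB XC XR \<longleftrightarrow>
     XB \<union> XC \<union> XR = V \<and> XB \<inter> XC = {} \<and> XB \<inter> XR = {} \<and> XC \<inter> XR = {} \<and>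
     bipartite_on E XB \<and> (\<forall>u\<in>XB. \<forall>v\<in>XR. \<not> E u v) \<and> XB \<union> XC \<noteq> {}"

definition is_tight_occ :: "'a set \<Rightarrow> ('a \<Rightarrow> 'a \<Rightarrow> bool) \<Rightarrow> 'a set \<Rightarrow> 'a set \<Rightarrow> 'a set \<Rightarrow> bool" where
  "is_tight_occ V E XB XC XR \<longleftrightarrow> is_occ V E XB XC XR \<and> card XC = oct E (XB \<union> XC)"

end

theory Submission
  imports Defs
begin

theorem mainTheorem9:
  fixes V :: "'a set" and E :: "'a \<Rightarrow> 'a \<Rightarrow> bool"
  assumes "graph V E"
    and "is_occ V E XB XC XR"
    and "is_tight_occ V E AB AC AR"
  shows "card (AC \<inter> XB) \<le> card XC"
proof -
  define S where "S = AB \<union> AC"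
  define T where "T = (AC - XB) \<union> (XC \<inter> S)"
  have fin: "finite V" and Ed: "\<And>u v. E u v \<Longrightarrow> u \<in> V \<and> v \<in> V \<and> E v u"
    using assms(1) unfolding graph_def by auto
  have X: "XB \<union> XC \<union> XR = V" "XB \<inter> XC = {}" "XB \<inter> XR = {}" "XC \<inter> XR = {}"
     "bipartite_on E XB" "\<forall>u\<in>XB. \<forall>v\<in>XR. \<not> E u v"
    using assms(2) unfolding is_occ_def by auto
  have A: "AB \<union> AC \<union> AR = V" "AB \<inter> AC = {}" "bipartite_on E AB" "card AC = oct E S"
    using assms(3) unfolding is_tight_occ_def is_occ_def S_def by auto
  obtain f :: "'a \<Rightarrow> bool" where f: "\<forall>u\<in>XB. \<forall>v\<in>XB. E u v \<longrightarrow> f u \<noteq> f v" using X(5) unfolding bipartite_on_def by blast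
  obtain g :: "'a \<Rightarrow> bool" where g: "\<forall>u\<in>AB. \<forall>v\<in>AB. E u v \<longrightarrow> g u \<noteq> g v" using A(3) unfolding bipartite_on_def by blast
  have finS: "finite S" using fin A(1) S_def by (metis finite_Un)
  have TS: "T \<subseteq> S" unfolding T_def S_def by auto
  have bip: "bipartite_on E (S - T)"
    unfolding bipartite_on_def
  proof (intro exI[of _ "\<lambda>u. if u \<in> XB then f u else g u"] ballI impI)
    fix u v assume u: "u \<in> S - T" and v: "v \<in> S - T" and e: "E u v"
    have uv: "u \<in> V" "v \<in> V" "E v u" using Ed[OF e] by auto
    have nu: "u \<notin> XC" "v \<notin> XC" using u v unfolding T_def by auto
    show "(if u \<in> XB then f u else g u) \<noteq> (if v \<in> XB then f v else g v)"
    proof (cases "u \<in> XB")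
      case True
      show ?thesis
      proof (cases "v \<in> XB")
        case True with \<open>u \<in> XB\<close> f e show ?thesis by auto
      next
        case False
        hence "v \<in> XR" using uv nu X(1) by auto
        with True X(6) e show ?thesis by auto
      qed
    next
      case False
      hence uR: "u \<in> XR" using uv nu X(1) by auto
      show ?thesis
      proof (cases "v \<in> XB")
        case True with uR X(6) uv show ?thesis by auto
      next
        case False
        have "u \<in> AB" "v \<in> AB" using u v \<open>u \<notin> XB\<close> False unfolding T_def S_def by auto
        with g e False \<open>u \<notin> XB\<close> show ?thesis by auto
      qed
    qed
  qed
  have "{card T' | T'. T' \<subseteq> S \<and> bipartite_on E (S - T')} \<subseteq> card ` Pow S" by auto
  hence finM: "finite {card T' | T'. T' \<subseteq> S \<and> bipartite_on E (S - T')}"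
    using finS finite_subset by blast
  have "oct E S \<le> card T" unfolding oct_def
    by (rule Min_le[OF finM]) (use TS bip in auto)
  also have "card T \<le> card (AC - XB) + card (XC \<inter> S)" unfolding T_def by (rule card_Un_le)
  finally have 1: "card AC \<le> card (AC - XB) + card (XC \<inter> S)" using A(4) by simp
  have finAC: "finite AC" using finS S_def by auto
  have "card AC = card (AC - XB) + card (AC \<inter> XB)"
  proof -
    have "AC = (AC - XB) \<union> (AC \<inter> XB)" by blast
    moreover have "card ((AC - XB) \<union> (AC \<inter> XB)) = card (AC - XB) + card (AC \<inter> XB)"
      by (rule card_Un_disjoint) (use finAC in auto)
    ultimately show ?thesis by simp
  qed
  moreover have "card (XC \<inter> S) \<le> card XC"
  proof -
    have "finite XC" using fin X(1) by (metis finite_Un)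
    thus ?thesis by (simp add: card_mono)
  qed
  ultimately show ?thesis using 1 by linarith
qed

end
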